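(* For all $n,k\in\mathbb{N}$, $T(n,\omega\cdot k)\ge k^{n}$. Consequently $T(n,\omega\cdot k)=k^{n}$.
   Context: $\mathbb{N}=\{0,1,2,\dots\}$ and $[c]=\{1,\dots,c\}$; the convention $0^0=1$ is used. Each ordinal $\alpha$ is identified with the linearly ordered set of ordinals $\beta<\alpha$; $\omega\cdot k$ is the concatenation of $k$ copies of $\omega$ (elements $\omega\cdot b+a$ with $0\le b<k$, $a\in\mathbb{N}$). $\binom{S}{n}$ is the set of $n$-element subsets of $S$. $\approx$ denotes order-equivalence (existence of an order-preserving bijection). For a linearly ordered set $S$ and $n\in\mathbb{N}$, $T(n,S)$ is the least $t\in\mathbb{N}$ such that for every $c\ge 1$ and every coloring $\mathrm{COL}:\binom{S}{n}\to[c]$ there exists $S'\subseteq S$ with $S'\approx S$ and $|\mathrm{COL}(\binom{S'}{n})|\le t$; if no such $t$ exists, $T(n,S)=\infty$. *)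

theory Defs
  imports Main "HOL-Library.Extended_Nat"
begin

definition nsubsets :: "'a set \<Rightarrow> nat \<Rightarrow> 'a set set" where
  "nsubsets S n = {X. X \<subseteq> S \<and> finite X \<and> card X = n}"

definition order_equiv :: "('a \<Rightarrow> 'a \<Rightarrow> bool) \<Rightarrow> 'a set \<Rightarrow> 'a set \<Rightarrow> bool" where
  "order_equiv lt A B \<longleftrightarrow>
     (\<exists>f. bij_betw f A B \<and> (\<forall>x\<in>A. \<forall>y\<in>A. lt x y \<longleftrightarrow> lt (f x) (f y)))"

definition T_bound :: "nat \<Rightarrow> 'a set \<Rightarrow> ('a \<Rightarrow> 'a \<Rightarrow> bool) \<Rightarrow> nat \<Rightarrow> bool" where
  "T_bound n S lt t \<longleftrightarrow>
     (\<forall>c::nat. c \<ge> 1 \<longrightarrow> (\<forall>COL :: 'a set \<Rightarrow> nat. (\<forall>X\<in>nsubsets S n. COL X \<in> {1..c}) \<longrightarrow>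
        (\<exists>S'. S' \<subseteq> S \<and> order_equiv lt S' S \<and> card (COL ` nsubsets S' n) \<le> t)))"

definition T :: "nat \<Rightarrow> 'a set \<Rightarrow> ('a \<Rightarrow> 'a \<Rightarrow> bool) \<Rightarrow> enat" where
  "T n S lt = (if \<exists>t. T_bound n S lt t then enat (LEAST t. T_bound n S lt t) else \<infinity>)"

text \<open>The ordinal omega * k: element omega*b + a is represented as the pair (b, a), b < k,
  ordered lexicographically.\<close>
definition omega_times :: "nat \<Rightarrow> (nat \<times> nat) set" where
  "omega_times k = {(b, a). b < k}"

definition omega_less :: "nat \<times> nat \<Rightarrow> nat \<times> nat \<Rightarrow> bool" where
  "omega_less p q \<longleftrightarrow> fst p < fst q \<or> (fst p = fst q \<and> snd p < snd q)"

end

theory Submission imports Defs "HOL-Library.Ramsey" "HOL-Library.Infinite_Set" "HOL-Library.Countable"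
begin

lemma multi_ramsey:
  fixes f :: "'b \<Rightarrow> 'a set \<Rightarrow> nat"
  assumes "finite L" "infinite Z"
    "\<forall>s\<in>L. \<forall>X. X \<subseteq> Z \<and> finite X \<and> card X = r \<longrightarrow> f s X < c"
  shows "\<exists>Y. Y \<subseteq> Z \<and> infinite Y \<and> (\<forall>s\<in>L. \<exists>t. \<forall>X. X \<subseteq> Y \<and> finite X \<and> card X = r \<longrightarrow> f s X = t)"
  using assms(1,3)
proof (induction L rule: finite_induct)
  case empty then show ?case using assms(2) by blast
next
  case (insert s0 L)
  then obtain Y where Y: "Y \<subseteq> Z" "infinite Y"
    "\<forall>s\<in>L. \<exists>t. \<forall>X. X \<subseteq> Y \<and> finite X \<and> card X = r \<longrightarrow> f s X = t" by auto
  have "\<forall>X. X \<subseteq> Y \<and> finite X \<and> card X = r \<longrightarrow> f s0 X < c" using insert.prems Y(1) by auto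
  from Ramsey[OF Y(2) this] obtain Y' t where Y': "Y' \<subseteq> Y" "infinite Y'"
    "\<forall>X. X \<subseteq> Y' \<and> finite X \<and> card X = r \<longrightarrow> f s0 X = t" by blast
  have "\<forall>s\<in>insert s0 L. \<exists>t. \<forall>X. X \<subseteq> Y' \<and> finite X \<and> card X = r \<longrightarrow> f s X = t"
  proof
    fix s assume "s \<in> insert s0 L"
    then show "\<exists>t. \<forall>X. X \<subseteq> Y' \<and> finite X \<and> card X = r \<longrightarrow> f s X = t"
    proof
      assume "s = s0" then show ?thesis using Y'(3) by blast
    next
      assume "s \<in> L"
      then obtain t' where "\<forall>X. X \<subseteq> Y \<and> finite X \<and> card X = r \<longrightarrow> f s X = t'" using Y(3) by blast
      then show ?thesis using Y'(1) by (meson order_trans)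
    qed
  qed
  then show ?case using Y Y' by (meson order_trans)
qed

lemma order_equiv_inv:
  assumes "bij_betw \<phi> A B" "\<forall>x\<in>A. \<forall>y\<in>A. lt x y \<longleftrightarrow> lt (\<phi> x) (\<phi> y)"
  shows "order_equiv lt B A"
  unfolding order_equiv_def
proof (intro exI conjI)
  show "bij_betw (inv_into A \<phi>) B A" using assms(1) by (rule bij_betw_inv_into)
  show "\<forall>x\<in>B. \<forall>y\<in>B. lt x y = lt (inv_into A \<phi> x) (inv_into A \<phi> y)"
  proof (intro ballI)
    fix x y assume xy: "x \<in> B" "y \<in> B"
    have B: "B = \<phi> ` A" using assms(1) by (simp add: bij_betw_def)
    have "inv_into A \<phi> x \<in> A" "inv_into A \<phi> y \<in> A" using xy B by (auto intro: inv_into_into)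
    moreover have "\<phi> (inv_into A \<phi> x) = x" "\<phi> (inv_into A \<phi> y) = y" using xy B by (auto intro: f_inv_into_f)
    ultimately show "lt x y = lt (inv_into A \<phi> x) (inv_into A \<phi> y)" using assms(2) by metis
  qed
qed

lemma upper:
  assumes k: "k > 0"
  shows "T_bound n (omega_times k) omega_less (k ^ n)"
  unfolding T_bound_def
proof (intro allI impI)
  fix c :: nat and COL :: "(nat \<times> nat) set \<Rightarrow> nat"
  assume col: "\<forall>X\<in>nsubsets (omega_times k) n. COL X \<in> {1..c}"
  define L where "L = {s. set s \<subseteq> {..<k} \<and> length s = n}"
  have finL: "finite L" and cardL: "card L = k ^ n"
    unfolding L_def using finite_lists_length_eq[of "{..<k}" n] card_lists_length_eq[of "{..<k}" n] by auto
  define mk where "mk s Y = set (zip s (sorted_list_of_set Y))" for s :: "nat list" and Y :: "nat set"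
  have mk_in: "mk s Y \<in> nsubsets (omega_times k) n" if "s \<in> L" "finite Y" "card Y = n" for s Y
  proof -
    let ?ys = "sorted_list_of_set Y"
    have len: "length ?ys = n" "length s = n" using that L_def by auto
    have "distinct (zip s ?ys)" by (rule distinct_zipI2) simp
    then have "card (mk s Y) = n" unfolding mk_def using len by (simp add: distinct_card)
    moreover have "mk s Y \<subseteq> omega_times k" unfolding mk_def omega_times_def
      using that(1) L_def by (auto dest: set_zip_leftD)
    ultimately show ?thesis unfolding nsubsets_def mk_def by auto
  qed
  have "\<forall>s\<in>L. \<forall>X. X \<subseteq> UNIV \<and> finite X \<and> card X = n \<longrightarrow> COL (mk s X) < Suc c"
    using col mk_in by (meson atLeastAtMost_iff le_imp_less_Suc)
  from multi_ramsey[OF finL _ this] obtain H where H: "infinite H"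
    "\<forall>s\<in>L. \<exists>t. \<forall>X. X \<subseteq> H \<and> finite X \<and> card X = n \<longrightarrow> COL (mk s X) = t" by auto
  then obtain tf where tf: "\<forall>s\<in>L. \<forall>X. X \<subseteq> H \<and> finite X \<and> card X = n \<longrightarrow> COL (mk s X) = tf s"
    by metis
  define h where "h = enumerate H"
  have hH: "h j \<in> H" for j unfolding h_def using H(1) by (rule enumerate_in_set)
  have hmono: "h i < h j \<longleftrightarrow> i < j" for i j unfolding h_def using H(1) by simp
  have hinj: "h i = h j \<longleftrightarrow> i = j" for i j using hmono by (metis less_irrefl linorder_neqE_nat)
  define S' where "S' = range (\<lambda>j. (j mod k, h j))"
  define \<phi> where "\<phi> = (\<lambda>(b,i). (b, h (k*i+b)))"
  show "\<exists>S'. S' \<subseteq> omega_times k \<and> order_equiv omega_less S' (omega_times k) \<and>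
             card (COL ` nsubsets S' n) \<le> k ^ n"
  proof (intro exI conjI)
    show sub: "S' \<subseteq> omega_times k" unfolding S'_def omega_times_def using k by auto
    have "bij_betw \<phi> (omega_times k) S'"
      unfolding bij_betw_def
    proof
      show "inj_on \<phi> (omega_times k)"
        unfolding inj_on_def \<phi>_def omega_times_def using k by (auto simp: hinj)
      show "\<phi> ` omega_times k = S'"
      proof
        show "\<phi> ` omega_times k \<subseteq> S'" unfolding S'_def \<phi>_def omega_times_def
        proof clarsimp
          fix b i assume "b < k"
          then have "(k*i+b) mod k = b" by simp
          then show "(b, h (k*i+b)) \<in> range (\<lambda>j. (j mod k, h j))" by (auto intro!: image_eqI[where x="k*i+b"])
        qed
        show "S' \<subseteq> \<phi> ` omega_times k" unfolding S'_def \<phi>_def omega_times_def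
        proof clarsimp
          fix j
          have "(j mod k, h j) = \<phi> (j mod k, j div k)" unfolding \<phi>_def
            by (simp add: mult.commute)
          moreover have "(j mod k, j div k) \<in> omega_times k" unfolding omega_times_def using k by simp
          ultimately show "(j mod k, h j) \<in> (\<lambda>(b, i). (b, h (k * i + b))) ` {(b, a). b < k}"
            unfolding \<phi>_def omega_times_def by blast
        qed
      qed
    qed
    moreover have "\<forall>x\<in>omega_times k. \<forall>y\<in>omega_times k. omega_less x y \<longleftrightarrow> omega_less (\<phi> x) (\<phi> y)"
      unfolding omega_times_def omega_less_def \<phi>_def using k by (auto simp: hmono)
    ultimately show "order_equiv omega_less S' (omega_times k)" by (rule order_equiv_inv)
    have "COL ` nsubsets S' n \<subseteq> tf ` L"
    proof
      fix z assume "z \<in> COL ` nsubsets S' n"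
      then obtain X where X: "X \<subseteq> S'" "finite X" "card X = n" and z: "z = COL X"
        unfolding nsubsets_def by auto
      have injS: "inj_on snd S'" unfolding S'_def inj_on_def by (auto simp: hinj)
      then have injX: "inj_on snd X" using X(1) inj_on_subset by blast
      define Y where "Y = snd ` X"
      have Yc: "card Y = n" "finite Y" unfolding Y_def using X injX by (auto simp: card_image)
      have YH: "Y \<subseteq> H" unfolding Y_def using X(1) S'_def hH by auto
      define blk where "blk y = fst (inv_into X snd y)" for y
      have blkx: "blk (snd x) = fst x" if "x \<in> X" for x
        unfolding blk_def using injX that by simp
      define s where "s = map blk (sorted_list_of_set Y)"
      have sL: "s \<in> L"
      proof -
        have "set s = blk ` Y" unfolding s_def using Yc by simp
        also have "\<dots> = fst ` X" unfolding Y_def using blkx by (auto simp: image_image)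
        also have "\<dots> \<subseteq> {..<k}" using X(1) sub unfolding omega_times_def by auto
        finally show ?thesis unfolding L_def s_def using Yc by simp
      qed
      have "mk s Y = (\<lambda>y. (blk y, y)) ` Y"
        unfolding mk_def s_def using Yc by (simp add: zip_map1 zip_same_conv_map image_image)
      also have "\<dots> = X" unfolding Y_def using blkx by (auto simp: image_image)
      finally have "COL X = tf s" using tf sL YH Yc by metis
      then show "z \<in> tf ` L" using z sL by blast
    qed
    then have "card (COL ` nsubsets S' n) \<le> card (tf ` L)"
      using finL by (simp add: card_mono)
    also have "\<dots> \<le> k ^ n" using card_image_le[OF finL, of tf] cardL by simp
    finally show "card (COL ` nsubsets S' n) \<le> k ^ n" .
  qed
qed

lemma blocks_unbounded:
  assumes sub: "S' \<subseteq> omega_times k" and oe: "order_equiv omega_less S' (omega_times k)"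
    and j: "j < k"
  shows "\<exists>a\<ge>N. (j, a) \<in> S'"
proof -
  let ?S = "omega_times k"
  obtain f where f: "bij_betw f S' ?S" "\<forall>x\<in>S'. \<forall>y\<in>S'. omega_less x y \<longleftrightarrow> omega_less (f x) (f y)"
    using oe unfolding order_equiv_def by blast
  define g where "g = inv_into S' f"
  have gbij: "bij_betw g ?S S'" unfolding g_def using f(1) by (rule bij_betw_inv_into)
  have gS: "g x \<in> S'" if "x \<in> ?S" for x using gbij that by (meson bij_betwE)
  have fg: "f (g x) = x" if "x \<in> ?S" for x unfolding g_def using f(1) that
    by (simp add: bij_betw_def f_inv_into_f)
  have gless: "omega_less x y \<longleftrightarrow> omega_less (g x) (g y)" if "x \<in> ?S" "y \<in> ?S" for x y
    using f(2) gS fg that by metis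
  have inS: "(i, a) \<in> ?S" if "i < k" for i a using that unfolding omega_times_def by simp
  have fstk: "fst (g (i, a)) < k" if "i < k" for i a
  proof -
    have "g (i, a) \<in> S'" using gS inS that by blast
    then show ?thesis using sub unfolding omega_times_def by auto
  qed
  define \<beta> where "\<beta> i = Max (range (\<lambda>a. fst (g (i, a))))" for i
  have fin: "finite (range (\<lambda>a. fst (g (i, a))))" if "i < k" for i
    by (rule finite_subset[of _ "{..<k}"]) (use fstk that in auto)
  have \<beta>ge: "fst (g (i, a)) \<le> \<beta> i" if "i < k" for i a
    unfolding \<beta>_def using fin[OF that] by simp
  have \<beta>att: "\<exists>a0. fst (g (i, a0)) = \<beta> i" if "i < k" for i
  proof -
    have "\<beta> i \<in> range (\<lambda>a. fst (g (i, a)))" unfolding \<beta>_def using fin[OF that] by (intro Max_in) auto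
    then show ?thesis by auto
  qed
  have mono: "fst (g (i, a)) \<le> fst (g (i, a'))" if "i < k" "a \<le> a'" for i a a'
  proof (cases "a = a'")
    case False
    then have "omega_less (i, a) (i, a')" using that unfolding omega_less_def by simp
    then have "omega_less (g (i, a)) (g (i, a'))" using gless inS that by blast
    then show ?thesis unfolding omega_less_def by auto
  qed simp
  have key: "\<exists>a0. \<forall>m. fst (g (i, a0 + m)) = \<beta> i \<and> m \<le> snd (g (i, a0 + m))" if i: "i < k" for i
  proof -
    obtain a0 where a0: "fst (g (i, a0)) = \<beta> i" using \<beta>att[OF i] by blast
    have "fst (g (i, a0 + m)) = \<beta> i \<and> m \<le> snd (g (i, a0 + m))" for m
    proof (induction m)
      case 0 then show ?case using a0 by simp
    next
      case (Suc m)
      have e: "fst (g (i, a0 + Suc m)) = \<beta> i"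
        using mono[OF i, of "a0 + m" "a0 + Suc m"] \<beta>ge[OF i, of "a0 + Suc m"] Suc.IH by simp
      have "omega_less (i, a0 + m) (i, a0 + Suc m)" unfolding omega_less_def by simp
      then have "omega_less (g (i, a0 + m)) (g (i, a0 + Suc m))" using gless inS i by blast
      then have "snd (g (i, a0 + m)) < snd (g (i, a0 + Suc m))" using e Suc.IH unfolding omega_less_def by simp
      then show ?case using e Suc.IH by simp
    qed
    then show ?thesis by blast
  qed
  have \<beta>lt: "\<beta> i < \<beta> (Suc i)" if i: "Suc i < k" for i
  proof -
    have i': "i < k" using i by simp
    obtain a0 where a0: "\<forall>m. fst (g (i, a0 + m)) = \<beta> i \<and> m \<le> snd (g (i, a0 + m))" using key[OF i'] by blast
    define v where "v = g (Suc i, 0)"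
    define u where "u = g (i, a0 + snd v)"
    have "omega_less (i, a0 + snd v) (Suc i, 0)" unfolding omega_less_def by simp
    then have "omega_less u v" unfolding u_def v_def using gless inS i i' by blast
    moreover have "fst u = \<beta> i" "snd v \<le> snd u" using a0 unfolding u_def by auto
    ultimately have "\<beta> i < fst v" unfolding omega_less_def by auto
    also have "fst v \<le> \<beta> (Suc i)" unfolding v_def using \<beta>ge[OF i] .
    finally show ?thesis .
  qed
  have \<beta>k: "\<beta> i < k" if "i < k" for i
    using \<beta>att[OF that] fstk[OF that] by metis
  have lo: "i \<le> \<beta> i" if "i < k" for i
    using that
  proof (induction i)
    case (Suc i) then show ?case using \<beta>lt[of i] by simp
  qed simp
  have hi: "\<beta> (k - 1 - d) \<le> k - 1 - d" if "d < k" for d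
    using that
  proof (induction d)
    case 0 then show ?case using \<beta>k[of "k - 1"] by simp
  next
    case (Suc d)
    have "\<beta> (k - 1 - Suc d) < \<beta> (Suc (k - 1 - Suc d))" using Suc.prems by (intro \<beta>lt) simp
    moreover have "Suc (k - 1 - Suc d) = k - 1 - d" using Suc.prems by simp
    ultimately show ?case using Suc by simp
  qed
  have "\<beta> j = j" using lo[OF j] hi[of "k - 1 - j"] j by simp
  obtain a0 where a0: "\<forall>m. fst (g (j, a0 + m)) = \<beta> j \<and> m \<le> snd (g (j, a0 + m))" using key[OF j] by blast
  define u where "u = g (j, a0 + N)"
  have "u \<in> S'" unfolding u_def using gS inS j by blast
  moreover have "u = (j, snd u)" "N \<le> snd u" using a0 \<open>\<beta> j = j\<close> unfolding u_def by (metis prod.collapse)+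
  ultimately show ?thesis by metis
qed

lemma greedy:
  fixes S' :: "(nat \<times> nat) set" and s :: "nat list"
  assumes "\<forall>j<k. \<forall>N. \<exists>a\<ge>N. (j, a) \<in> S'"
  shows "set s \<subseteq> {..<k} \<Longrightarrow> \<exists>ys. length ys = length s \<and> sorted_wrt (<) ys \<and> (\<forall>y\<in>set ys. N \<le> y)
           \<and> set (zip s ys) \<subseteq> S'"
proof (induction s arbitrary: N)
  case Nil then show ?case by simp
next
  case (Cons b s)
  then have "\<exists>a\<ge>N. (b, a) \<in> S'" using assms by simp
  then obtain a where a: "a \<ge> N" "(b, a) \<in> S'" by blast
  obtain ys where ys: "length ys = length s" "sorted_wrt (<) ys" "\<forall>y\<in>set ys. Suc a \<le> y"
    "set (zip s ys) \<subseteq> S'" using Cons.IH[of "Suc a"] Cons.prems by auto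
  show ?case
    by (rule exI[of _ "a # ys"]) (use a ys in auto)
qed

lemma lower:
  assumes tb: "T_bound n (omega_times k) omega_less t"
  shows "k ^ n \<le> t"
proof -
  let ?S = "omega_times k"
  define blk where "blk X y = (SOME b. (b, y) \<in> X)" for X :: "(nat \<times> nat) set" and y
  define COL where "COL X = to_nat (map (blk X) (sorted_list_of_set (snd ` X))) + 1" for X
  define LL where "LL = {l :: nat list. set l \<subseteq> {..<k} \<and> length l \<le> n}"
  define V where "V = (\<lambda>l. to_nat l + 1) ` LL"
  have finV: "finite V" unfolding V_def LL_def by (intro finite_imageI finite_lists_length_le) simp
  define c where "c = Max (insert 1 V)"
  have c1: "c \<ge> 1" unfolding c_def using finV by simp
  have inV: "COL X \<in> V" if "X \<in> nsubsets ?S n" for X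
  proof -
    have X: "X \<subseteq> ?S" "finite X" "card X = n" using that unfolding nsubsets_def by auto
    have "blk X y < k" if "y \<in> snd ` X" for y
    proof -
      obtain x where "x \<in> X" "y = snd x" using \<open>y \<in> snd ` X\<close> by blast
      then have "(fst x, y) \<in> X" by simp
      then have "(blk X y, y) \<in> X" unfolding blk_def by (rule someI)
      then show ?thesis using X(1) unfolding omega_times_def by auto
    qed
    moreover have "card (snd ` X) \<le> n" using X card_image_le by metis
    ultimately have "map (blk X) (sorted_list_of_set (snd ` X)) \<in> LL"
      unfolding LL_def using X(2) by auto
    then show ?thesis unfolding COL_def V_def by blast
  qed
  have "\<forall>X\<in>nsubsets ?S n. COL X \<in> {1..c}"
  proof
    fix X assume "X \<in> nsubsets ?S n"
    then have "COL X \<in> V" by (rule inV)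
    then show "COL X \<in> {1..c}" unfolding c_def using finV by (auto simp: COL_def)
  qed
  then obtain S' where S': "S' \<subseteq> ?S" "order_equiv omega_less S' ?S"
    "card (COL ` nsubsets S' n) \<le> t"
    using tb c1 unfolding T_bound_def by blast
  have unb: "\<forall>j<k. \<forall>N. \<exists>a\<ge>N. (j, a) \<in> S'" using blocks_unbounded[OF S'(1,2)] by blast
  define L where "L = {s. set s \<subseteq> {..<k} \<and> length s = n}"
  have finL: "finite L" and cardL: "card L = k ^ n"
    unfolding L_def using finite_lists_length_eq[of "{..<k}" n] card_lists_length_eq[of "{..<k}" n] by auto
  have sub1: "COL ` nsubsets S' n \<subseteq> V"
    using inV S'(1) unfolding nsubsets_def by blast
  have sub2: "(\<lambda>l. to_nat l + 1) ` L \<subseteq> COL ` nsubsets S' n"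
  proof
    fix z assume "z \<in> (\<lambda>l. to_nat l + 1) ` L"
    then obtain s where s: "s \<in> L" and z: "z = to_nat s + 1" by blast
    obtain ys where ys: "length ys = length s" "sorted_wrt (<) ys" "set (zip s ys) \<subseteq> S'"
      using greedy[OF unb, of s 0] s unfolding L_def by auto
    define X where "X = set (zip s ys)"
    have dys: "distinct ys" using ys(2) by (simp add: strict_sorted_iff)
    have "distinct (zip s ys)" using dys by (rule distinct_zipI2)
    then have cX: "card X = n" unfolding X_def using ys(1) s L_def by (simp add: distinct_card)
    have sX: "snd ` X = set ys" unfolding X_def using ys(1)
      by (metis map_snd_zip set_map)
    have sl: "sorted_list_of_set (set ys) = ys" using ys(2)
      by (simp add: sorted_list_of_set_sort_remdups strict_sorted_iff distinct_remdups_id sorted_sort_id)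
    have "map (blk X) ys = s"
    proof (rule nth_equalityI)
      show "length (map (blk X) ys) = length s" using ys(1) by simp
      fix i assume "i < length (map (blk X) ys)"
      then have i: "i < length ys" by simp
      have mem: "(s ! i, ys ! i) \<in> X" unfolding X_def using i ys(1)
        by (metis in_set_zip fst_conv snd_conv)
      have uniq: "b = s ! i" if bX: "(b, ys ! i) \<in> X" for b
      proof -
        obtain m where m: "s ! m = b" "ys ! m = ys ! i" "m < length s" "m < length ys"
          using bX unfolding X_def by (auto simp: in_set_zip)
        then have "m = i" using dys i nth_eq_iff_index_eq by metis
        then show ?thesis using m by simp
      qed
      have "(blk X (ys ! i), ys ! i) \<in> X" unfolding blk_def using mem by (rule someI)
      then show "map (blk X) ys ! i = s ! i" using uniq i by simp
    qed
    then have "COL X = z" unfolding COL_def z using sX sl by simp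
    moreover have "X \<in> nsubsets S' n" unfolding nsubsets_def X_def using ys(3) cX X_def by auto
    ultimately show "z \<in> COL ` nsubsets S' n" by blast
  qed
  have "k ^ n = card ((\<lambda>l. to_nat l + 1) ` L)"
    using cardL by (simp add: card_image inj_on_def)
  also have "\<dots> \<le> card (COL ` nsubsets S' n)"
    using sub2 sub1 finV by (meson card_mono finite_subset)
  also have "\<dots> \<le> t" by (rule S'(3))
  finally show ?thesis .
qed

lemma upper0: "T_bound n (omega_times 0) omega_less (0 ^ n)"
  unfolding T_bound_def
proof (intro allI impI exI conjI)
  fix c :: nat and COL :: "(nat \<times> nat) set \<Rightarrow> nat"
  show "omega_times 0 \<subseteq> omega_times 0" by simp
  show "order_equiv omega_less (omega_times 0) (omega_times 0)"
    unfolding order_equiv_def by (intro exI[of _ id]) simp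
  have e: "omega_times 0 = {}" unfolding omega_times_def by simp
  show "card (COL ` nsubsets (omega_times 0) n) \<le> 0 ^ n"
  proof (cases n)
    case 0
    then have "nsubsets (omega_times 0) n = {{}}" unfolding e nsubsets_def by auto
    then show ?thesis using 0 by simp
  next
    case (Suc m)
    then have "nsubsets (omega_times 0) n = {}" unfolding e nsubsets_def by auto
    then show ?thesis by simp
  qed
qed

theorem theorem5p2:
  fixes n k :: nat
  shows "T n (omega_times k) omega_less \<ge> enat (k ^ n) \<and>
         T n (omega_times k) omega_less = enat (k ^ n)"
proof -
  have ub: "T_bound n (omega_times k) omega_less (k ^ n)"
    using upper[of k n] upper0[of n] by (cases "k = 0") auto
  have "(LEAST t. T_bound n (omega_times k) omega_less t) = k ^ n"
    by (rule Least_equality) (use ub lower in auto)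
  then have "T n (omega_times k) omega_less = enat (k ^ n)"
    unfolding T_def using ub by auto
  then show ?thesis by simp
qed

end
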